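(* Let the sequence $r$ on positive integers be defined by $r(1)=0$, $r(k)=\frac{3k}{2}+r(\frac{k}{2})$ if $k$ is even, and $r(k)=2+\frac{3(k-1)}{2}+r(\frac{k+1}{2})$ if $k\neq1$ is odd. Then for every positive integer $k$, $$r(k)\leq 3\left(2^{\lceil\log_2k\rceil}-1\right)<6k-3.$$ *)

theory Defs
  imports Complex_Main
begin

text \<open>The sequence r on positive integers; the value at 0 is an irrelevant default.\<close>
function r :: "nat \<Rightarrow> real" where
  "r k = (if k \<le> 1 then 0
          else if even k then 3 * real k / 2 + r (k div 2)
          else 2 + 3 * (real k - 1) / 2 + r ((k + 1) div 2))"
  by auto
termination
  by (relation "measure id") (auto, presburger)

end

theory Submission
  imports Defs
begin

declare r.simps[simp del]

lemma r_le1: "k \<le> 1 \<Longrightarrow> r k = 0"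
  by (subst r.simps[of k]) simp

lemma r_bound: "1 \<le> k \<Longrightarrow> k \<le> 2 ^ m \<Longrightarrow> r k \<le> 3 * ((2::real) ^ m - 1)"
proof (induction m arbitrary: k)
  case 0
  then have "k = 1" by simp
  then show ?case by (simp add: r_le1)
next
  case (Suc m)
  show ?case
  proof (cases "k \<le> 1")
    case True
    have "r k = 0" using True by (simp add: r_le1)
    moreover have "(1::real) \<le> 2 ^ m" by simp
    ultimately show ?thesis by (simp only: power_Suc ring_distribs)
  next
    case False
    show ?thesis
    proof (cases "even k")
      case True
      then obtain j where j: "k = 2 * j" by blast
      have "j \<le> 2 ^ m" "1 \<le> j" using Suc.prems False j by auto
      then have ih: "r j \<le> 3 * (2 ^ m - 1)" using Suc.IH by blast
      have e: "r k = 3 * real k / 2 + r j" using False True j by (subst r.simps[of k]) simp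
      have hj: "real j \<le> 2 ^ m" using \<open>j \<le> 2 ^ m\<close>
        by (metis of_nat_le_iff of_nat_numeral of_nat_power)
      have ih': "r j \<le> 3 * 2 ^ m - 3" using ih by simp
      have "real k = 2 * real j" using j by simp
      then have "r k \<le> 6 * 2 ^ m - 3" using e hj ih' by linarith
      then show ?thesis by simp
    next
      case odd: False
      then obtain j where j: "k = 2 * j + 1" using oddE by blast
      have "k \<noteq> 2 ^ Suc m" using odd by (metis dvd_triv_left power_Suc)
      then have "j + 1 \<le> 2 ^ m" "1 \<le> j + 1" using Suc.prems j by auto
      then have ih: "r (j+1) \<le> 3 * (2 ^ m - 1)" using Suc.IH by blast
      have "(k + 1) div 2 = j + 1" using j by simp
      then have e: "r k = 2 + 3 * (real k - 1) / 2 + r (j+1)" using False odd by (subst r.simps[of k]) simp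
      have hj: "real (j+1) \<le> 2 ^ m" using \<open>j + 1 \<le> 2 ^ m\<close>
        by (metis of_nat_le_iff of_nat_numeral of_nat_power)
      have ih': "r (j+1) \<le> 3 * 2 ^ m - 3" using ih by simp
      have "real k = 2 * real j + 1" using j by simp
      then have "r k \<le> 6 * 2 ^ m - 3" using e hj ih' by (simp add: algebra_simps)
      then show ?thesis by simp
    qed
  qed
qed

theorem lemma6:
  fixes k :: nat
  assumes "k \<ge> 1"
  shows "r k \<le> 3 * (2 powr (real_of_int (ceiling (log 2 (real k)))) - 1)
         \<and> 3 * (2 powr (real_of_int (ceiling (log 2 (real k)))) - 1) < 6 * real k - 3"
proof -
  define c where "c = ceiling (log 2 (real k))"
  have k: "real k \<ge> 1" using assms by simp
  have "log 2 (real k) \<ge> 0" using k by simp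
  then have c0: "c \<ge> 0" unfolding c_def by linarith
  define m where "m = nat c"
  have cm: "real_of_int c = real m" using c0 m_def by simp
  have pw: "2 powr (real m) = 2 ^ m" by (simp add: powr_realpow)
  have "log 2 (real k) \<le> c" unfolding c_def by simp
  moreover have "real k = 2 powr (log 2 (real k))" using k by simp
  ultimately have "real k \<le> 2 powr c"
    by (metis powr_mono one_le_numeral)
  then have "real k \<le> 2 ^ m" using cm pw by simp
  then have km: "k \<le> 2 ^ m"
    by (metis of_nat_le_iff of_nat_numeral of_nat_power)
  have "c - 1 < log 2 (real k)" unfolding c_def by linarith
  then have "2 powr (c - 1) < real k"
    using k by (simp add: less_log_iff)
  then have "2 powr c < 2 * real k" by (simp add: powr_diff)
  then have lt: "2 ^ m < 2 * real k" using cm pw by simp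
  have "r k \<le> 3 * (2 ^ m - 1)" using r_bound[OF assms km] .
  then show ?thesis using lt cm pw unfolding c_def[symmetric] by simp
qed

end
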